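(* For every integer $q\ge 12$ there exists a good $\mathcal{SOS}_q(2)$ whose weight is a unit modulo $q$ and whose period is $\frac{(q-2)(q-4)}{2}-3$ if $q\equiv 0\pmod 4$, $\frac{(q-3)(q-5)}{2}-3$ if $q\equiv 1\pmod 4$, $\frac{(q-2)(q-6)}{2}-3$ if $q\equiv 2\pmod 4$, and $\frac{(q-3)(q-7)}{2}-3$ if $q\equiv 3\pmod 4$.
   Context: For a periodic sequence $S=(s_i)$ over $\mathbb{Z}_q$ write $\mathbf{s}_n(i)=(s_i,\ldots,s_{i+n-1})$; $\mathbf{u}^R$ denotes the reverse of a tuple and $-\mathbf{u}$ its termwise negative. An $\mathcal{SOS}_q(n)$ is a periodic sequence of period $m$ over $\mathbb{Z}_q$ such that $\mathbf{s}_n(i)=\mathbf{s}_n(j)$ implies $i\equiv j\pmod m$, and $\mathbf{s}_n(i)\neq\mathbf{s}_n(j)^R$ and $\mathbf{s}_n(i)\neq-\mathbf{s}_n(j)^R$ for all $i,j$. It is good if every run of consecutive $0$ terms has length at most $n-2$ (for $n=2$: no term is $0$). The weight of $S$ is $s_0+\cdots+s_{m-1}$ computed in the integers with terms in $\{0,\ldots,q-1\}$. *)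

theory Defs
  imports Main
begin

text \<open>A periodic sequence over Z_q is a function s :: nat => nat with values in {0..q-1}
  and s (i + m) = s i. The window s_n(i) = (s_i, ..., s_{i+n-1}) is a list.\<close>

definition window :: "(nat \<Rightarrow> nat) \<Rightarrow> nat \<Rightarrow> nat \<Rightarrow> nat list" where
  "window s n i = map (\<lambda>k. s (i + k)) [0..<n]"

definition neg_tuple :: "nat \<Rightarrow> nat list \<Rightarrow> nat list" where
  "neg_tuple q xs = map (\<lambda>x. (q - x) mod q) xs"

definition is_SOS :: "nat \<Rightarrow> nat \<Rightarrow> nat \<Rightarrow> (nat \<Rightarrow> nat) \<Rightarrow> bool" where
  "is_SOS q n m s \<longleftrightarrow>
     0 < m \<and> (\<forall>i. s i < q) \<and> (\<forall>i. s (i + m) = s i) \<and>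
     (\<forall>i j. window s n i = window s n j \<longrightarrow> i mod m = j mod m) \<and>
     (\<forall>i j. window s n i \<noteq> rev (window s n j) \<and>
            window s n i \<noteq> neg_tuple q (rev (window s n j)))"

text \<open>Good: every run of consecutive zeros has length at most n - 2, i.e. there is no
  run of n - 1 consecutive zeros (for n = 2: no term is 0).\<close>
definition good_SOS :: "nat \<Rightarrow> (nat \<Rightarrow> nat) \<Rightarrow> bool" where
  "good_SOS n s \<longleftrightarrow> \<not> (\<exists>i. \<forall>k < n - 1. s (i + k) = 0)"

definition weight :: "nat \<Rightarrow> (nat \<Rightarrow> nat) \<Rightarrow> nat" where
  "weight m s = (\<Sum>i<m. s i)"

end

theory Submission
  imports Defs
begin

definition arcs :: "'a list \<Rightarrow> ('a \<times> 'a) list" where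
  "arcs xs = zip xs (tl xs)"

lemma arcs_Nil[simp]: "arcs [] = []" and arcs_single[simp]: "arcs [x] = []"
  and arcs_Cons2[simp]: "arcs (x # y # zs) = (x, y) # arcs (y # zs)"
  by (simp_all add: arcs_def)

lemma arcs_append: "xs \<noteq> [] \<Longrightarrow> ys \<noteq> [] \<Longrightarrow>
  arcs (xs @ ys) = arcs xs @ (last xs, hd ys) # arcs ys"
proof (induction xs rule: induct_list012)
  case (3 x y zs) then show ?case by simp
next
  case (2 x) then show ?case by (cases ys) auto
qed simp

lemma length_arcs[simp]: "length (arcs xs) = length xs - 1"
  by (simp add: arcs_def)

lemma nth_arcs: "k < length xs - 1 \<Longrightarrow> arcs xs ! k = (xs ! k, xs ! Suc k)"
  by (simp add: arcs_def nth_tl)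

lemma arcs_map: "arcs (map f xs) = map (\<lambda>(a,b). (f a, f b)) (arcs xs)"
  by (simp add: arcs_def map_tl[symmetric] zip_map_map)

lemma abstract:
  fixes Q :: "nat list" and q :: nat
  defines "n \<equiv> length Q - 1"
  defines "s \<equiv> (\<lambda>i. Q ! (i mod n))"
  assumes len: "length Q \<ge> 2" and hl: "hd Q = last Q" and dist: "distinct (arcs Q)"
    and rng: "\<forall>x\<in>set Q. 0 < x \<and> x < q"
    and cf: "\<forall>a b c d. (a,b) \<in> set (arcs Q) \<longrightarrow> (c,d) \<in> set (arcs Q) \<longrightarrow>
        (a,b) \<noteq> (d,c) \<and> (a,b) \<noteq> ((q-d) mod q, (q-c) mod q)"
  shows "is_SOS q 2 n s \<and> good_SOS 2 s \<and> weight n s = sum_list (butlast Q)"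
proof -
  have n0: "0 < n" using len by (simp add: n_def)
  have win: "window s 2 i = [fst (arcs Q ! (i mod n)), snd (arcs Q ! (i mod n))]" for i
  proof -
    have im: "i mod n < n" using n0 by simp
    have a: "arcs Q ! (i mod n) = (Q ! (i mod n), Q ! Suc (i mod n))"
      using im by (simp add: nth_arcs n_def)
    have "s (Suc i) = Q ! Suc (i mod n)"
    proof (cases "Suc (i mod n) < n")
      case True
      then have "Suc i mod n = Suc (i mod n)" by (simp add: mod_Suc)
      then show ?thesis by (simp add: s_def)
    next
      case False
      then have e: "Suc (i mod n) = n" using im by simp
      then have "Suc i mod n = 0" by (simp add: mod_Suc)
      moreover have "Q ! 0 = Q ! n" using hl len
        by (metis hd_conv_nth last_conv_nth list.size(3) n_def not_numeral_le_zero)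
      ultimately show ?thesis using e by (simp add: s_def)
    qed
    then show ?thesis using a by (simp add: window_def s_def numeral_2_eq_2)
  qed
  have inset: "arcs Q ! (i mod n) \<in> set (arcs Q)" for i
    using n0 by (simp add: n_def)
  have vals: "s i \<in> set Q" for i
  proof -
    have "i mod n < length Q" using n0 unfolding n_def
      using mod_less_divisor[of "length Q - 1" i] by linarith
    then show ?thesis by (simp add: s_def)
  qed
  have p1: "\<forall>i. s i < q" using vals rng by blast
  have p2: "\<forall>i. s (i + n) = s i" by (simp add: s_def)
  have p3: "\<forall>i j. window s 2 i = window s 2 j \<longrightarrow> i mod n = j mod n"
  proof (intro allI impI)
    fix i j assume "window s 2 i = window s 2 j"
    then have "arcs Q ! (i mod n) = arcs Q ! (j mod n)" using win
      by (simp add: prod_eq_iff)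
    then show "i mod n = j mod n" using dist n0
      by (simp add: nth_eq_iff_index_eq n_def)
  qed
  have p4: "\<forall>i j. window s 2 i \<noteq> rev (window s 2 j) \<and>
            window s 2 i \<noteq> neg_tuple q (rev (window s 2 j))"
  proof (intro allI)
    fix i j
    obtain a b where ab: "arcs Q ! (i mod n) = (a,b)" by fastforce
    obtain c d where cd: "arcs Q ! (j mod n) = (c,d)" by fastforce
    have "(a,b) \<in> set (arcs Q)" "(c,d) \<in> set (arcs Q)" using inset ab cd by metis+
    then have "(a,b) \<noteq> (d,c) \<and> (a,b) \<noteq> ((q-d) mod q, (q-c) mod q)" using cf by blast
    then show "window s 2 i \<noteq> rev (window s 2 j) \<and>
            window s 2 i \<noteq> neg_tuple q (rev (window s 2 j))"
      using win[of i] win[of j] ab cd by (simp add: neg_tuple_def)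
  qed
  have good: "good_SOS 2 s"
  proof -
    have "s i \<noteq> 0" for i using vals[of i] rng by fastforce
    then show ?thesis unfolding good_SOS_def by auto
  qed
  have w: "weight n s = sum_list (butlast Q)"
  proof -
    have "weight n s = (\<Sum>i<n. Q ! i)" unfolding weight_def s_def by simp
    also have "\<dots> = (\<Sum>i<n. butlast Q ! i)" by (simp add: nth_butlast n_def)
    also have "\<dots> = sum_list (butlast Q)"
      by (simp add: sum_list_sum_nth lessThan_atLeast0 n_def)
    finally show ?thesis .
  qed
  show ?thesis using n0 p1 p2 p3 p4 good w unfolding is_SOS_def by blast
qed

definition blk :: "int \<Rightarrow> int \<Rightarrow> int list" where
  "blk k i = [k, -i, -k, i]"
definition blkarcs :: "int \<Rightarrow> int \<Rightarrow> (int \<times> int) list" where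
  "blkarcs k i = [(k,-i),(-i,-k),(-k,i),(i,k)]"
definition lay :: "int \<Rightarrow> nat \<Rightarrow> int list" where
  "lay k n = concat (map (\<lambda>i. blk k (int i)) [1..<Suc n]) @ [k, -(k-1), -k]"
definition step :: "int \<Rightarrow> nat \<Rightarrow> int list \<Rightarrow> int list" where
  "step k n P = lay k n @ P @ [k]"
definition core :: "int \<Rightarrow> int list" where
  "core z = [3,1,2,-1,-2,z,-3,-1,z,3]"
fun build :: "int \<Rightarrow> nat \<Rightarrow> int list" where
  "build z 0 = core z"
| "build z (Suc j) = step (int j + 4) (j+2) (build z j)"

definition VV :: "int \<Rightarrow> int \<Rightarrow> int \<Rightarrow> bool" where
  "VV z T v \<longleftrightarrow> v = z \<or> (1 \<le> \<bar>v\<bar> \<and> \<bar>v\<bar> \<le> T)"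
definition LA :: "int \<Rightarrow> int \<times> int \<Rightarrow> bool" where
  "LA T x \<longleftrightarrow> (\<exists>i k. 1 \<le> i \<and> i < k \<and> 4 \<le> k \<and> k \<le> T \<and> x \<in> set (blkarcs k i))"

definition Inv :: "int \<Rightarrow> int \<Rightarrow> int list \<Rightarrow> bool" where
  "Inv z T P \<longleftrightarrow> P \<noteq> [] \<and> hd P = T \<and> last P = T \<and> distinct (arcs P) \<and>
     (\<forall>x\<in>set (arcs P). x \<in> set (arcs (core z)) \<or> LA T x) \<and> (\<forall>v\<in>set P. VV z T v) \<and>
     sum_list (butlast P) = 2*z - 1"

lemma arcs_blocks:
  assumes "ys \<noteq> []" "hd ys = k"
  shows "arcs (concat (map (\<lambda>i. blk k (f i)) is) @ ys) = concat (map (\<lambda>i. blkarcs k (f i)) is) @ arcs ys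
     \<and> concat (map (\<lambda>i. blk k (f i)) is) @ ys \<noteq> [] \<and> hd (concat (map (\<lambda>i. blk k (f i)) is) @ ys) = k"
proof (induction "is")
  case Nil then show ?case using assms by simp
next
  case (Cons a as)
  define W where "W = concat (map (\<lambda>i. blk k (f i)) as) @ ys"
  have W: "arcs W = concat (map (\<lambda>i. blkarcs k (f i)) as) @ arcs ys" "W \<noteq> []" "hd W = k"
    using Cons unfolding W_def by auto
  then obtain W' where W': "W = k # W'" by (cases W) auto
  have "concat (map (\<lambda>i. blk k (f i)) (a # as)) @ ys = [k, - f a, - k, f a] @ W"
    by (simp add: blk_def W_def)
  then show ?case using W W' by (simp add: blkarcs_def)
qed

lemma arcs_mem: "x \<in> set (arcs P) \<Longrightarrow> fst x \<in> set P \<and> snd x \<in> set P"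
proof -
  have "set (tl P) \<subseteq> set P" by (cases P) auto
  then show "x \<in> set (arcs P) \<Longrightarrow> fst x \<in> set P \<and> snd x \<in> set P"
    unfolding arcs_def by (metis in_mono prod.collapse set_zip_leftD set_zip_rightD)
qed

lemma arcs_step:
  assumes "P \<noteq> []" "hd P = k - 1" "last P = k - 1"
  shows "arcs (step k n P) = concat (map (\<lambda>i. blkarcs k (int i)) [1..<Suc n]) @
      [(k,-(k-1)),(-(k-1),-k),(-k,k-1)] @ arcs P @ [(k-1,k)]"
proof -
  let ?ys = "[k, -(k-1), -k] @ P @ [k]"
  have "step k n P = concat (map (\<lambda>i. blk k (int i)) [1..<Suc n]) @ ?ys"
    by (simp add: step_def lay_def)
  then have "arcs (step k n P) = concat (map (\<lambda>i. blkarcs k (int i)) [1..<Suc n]) @ arcs ?ys"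
    using arcs_blocks[of ?ys k int] by simp
  moreover have "arcs ?ys = [(k,-(k-1)),(-(k-1),-k),(-k,k-1)] @ arcs P @ [(k-1,k)]"
  proof -
    have "arcs ([-k] @ (P @ [k])) = (-k, k-1) # arcs (P @ [k])"
      using assms by (subst arcs_append) auto
    moreover have "arcs (P @ [k]) = arcs P @ [(k-1,k)]"
      using assms by (subst arcs_append) auto
    ultimately show ?thesis by simp
  qed
  ultimately show ?thesis by simp
qed

lemma distinct_blocks: "0 < k \<Longrightarrow> distinct (concat (map (\<lambda>i. blkarcs k (int i)) [1..<Suc n]))"
proof (induction n)
  case 0 then show ?case by simp
next
  case (Suc n)
  then show ?case by (auto simp: blkarcs_def)
qed

lemma set_blocks: "x \<in> set (concat (map (\<lambda>i. blkarcs k (int i)) [1..<Suc n])) \<longleftrightarrow>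
   (\<exists>i::nat. 1 \<le> i \<and> i \<le> n \<and> x \<in> set (blkarcs k (int i)))"
  by (auto simp del: upt_Suc)

lemma set_lay: "v \<in> set (lay k n) \<Longrightarrow> v = k \<or> v = -k \<or> v = -(k-1) \<or> (\<exists>i::nat. 1 \<le> i \<and> i \<le> n \<and> (v = int i \<or> v = - int i))"
proof -
  assume "v \<in> set (lay k n)"
  then have "(\<exists>i\<in>set [1..<Suc n]. v \<in> set (blk k (int i))) \<or> v \<in> {k, -(k-1), -k}"
    unfolding lay_def by (simp only: set_append set_concat set_map) auto
  then show ?thesis by (auto simp: blk_def)
qed

lemma sum_lay: "sum_list (lay k n) = 1 - k"
proof -
  have "sum_list (concat (map (\<lambda>i. blk k (int i)) xs)) = 0" for xs
    by (induction xs) (auto simp: blk_def)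
  then show ?thesis by (simp add: lay_def)
qed

lemma length_lay: "length (lay k n) = 4 * n + 3"
proof -
  have "length (concat (map (\<lambda>i. blk k (int i)) xs)) = 4 * length xs" for xs
    by (induction xs) (auto simp: blk_def)
  then show ?thesis by (simp add: lay_def)
qed

lemma Inv_step:
  assumes inv: "Inv z (k-1) P" and k4: "4 \<le> k" and kz: "k < z" and nk: "int n \<le> k - 2"
  shows "Inv z k (step k n P) \<and> length (step k n P) = length P + 4*n + 4"
proof -
  from inv have P: "P \<noteq> []" "hd P = k - 1" "last P = k - 1" "distinct (arcs P)"
    "\<forall>x\<in>set (arcs P). x \<in> set (arcs (core z)) \<or> LA (k-1) x" "\<forall>v\<in>set P. VV z (k-1) v"
    "sum_list (butlast P) = 2*z - 1"
    unfolding Inv_def by auto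
  define B where "B = concat (map (\<lambda>i. blkarcs k (int i)) [1..<Suc n])"
  define E where "E = [(k,-(k-1)),(-(k-1),-k),(-k,k-1)]"
  define F where "F = [(k-1,k)]"
  have A: "arcs (step k n P) = B @ E @ arcs P @ F"
    using arcs_step[OF P(1-3)] by (simp add: B_def E_def F_def)
  have Bmem: "x \<in> set B \<Longrightarrow> \<exists>i::nat. 1 \<le> i \<and> i \<le> n \<and> x \<in> set (blkarcs k (int i))" for x
    unfolding B_def by (simp only: set_blocks)
  have dB: "distinct B" unfolding B_def using k4 by (intro distinct_blocks) simp
  have kk: "\<bar>fst x\<bar> = k \<or> \<bar>snd x\<bar> = k" if "x \<in> set B \<union> set E \<union> set F" for x
    using that Bmem[of x] k4 unfolding E_def F_def blkarcs_def by (cases x) auto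
  have VVk: "VV z (k-1) v \<Longrightarrow> \<bar>v\<bar> \<noteq> k" for v using kz k4 unfolding VV_def by auto
  have oldk: "\<bar>fst x\<bar> \<noteq> k \<and> \<bar>snd x\<bar> \<noteq> k" if "x \<in> set (arcs P)" for x
    using arcs_mem[OF that] P(6) VVk by blast
  have BE: "set B \<inter> set E = {}"
  proof -
    have "x \<notin> set E" if "x \<in> set B" for x
      using Bmem[OF that] nk k4 unfolding E_def blkarcs_def by (cases x) (auto; presburger)
    then show ?thesis by blast
  qed
  have BF: "set B \<inter> set F = {}"
  proof -
    have "x \<notin> set F" if "x \<in> set B" for x
      using Bmem[OF that] nk k4 unfolding F_def blkarcs_def by (cases x) (auto; presburger)
    then show ?thesis by blast
  qed
  have PO: "x \<notin> set B \<and> x \<notin> set E \<and> x \<notin> set F" if "x \<in> set (arcs P)" for x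
    using kk[of x] oldk[OF that] by auto
  have dE: "distinct E" "set E \<inter> set F = {}" using k4 unfolding E_def F_def by auto
  have dist: "distinct (B @ E @ arcs P @ F)"
    using dB BE BF P(4) PO dE unfolding distinct_append set_append
    by (auto simp: F_def)
  have LAk: "LA k x" if "x \<in> set B \<union> set E \<union> set F" for x
  proof -
    have "x \<in> set (blkarcs k (k-1))" if "x \<in> set E \<union> set F"
      using that unfolding E_def F_def blkarcs_def by auto
    show ?thesis
    proof (cases "x \<in> set B")
      case True
      then obtain i :: nat where "1 \<le> i" "i \<le> n" "x \<in> set (blkarcs k (int i))" using Bmem by blast
      then show ?thesis unfolding LA_def using nk k4
        by (intro exI[of _ "int i"] exI[of _ k]) auto
    next
      case False
      then have "x \<in> set (blkarcs k (k-1))" using that \<open>x \<in> set E \<union> set F \<Longrightarrow> _\<close> by blast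
      then show ?thesis unfolding LA_def using k4
        by (intro exI[of _ "k-1"] exI[of _ k]) auto
    qed
  qed
  have LAmono: "LA (k-1) x \<Longrightarrow> LA k x" for x unfolding LA_def by force
  have arcsok: "\<forall>x\<in>set (arcs (step k n P)). x \<in> set (arcs (core z)) \<or> LA k x"
    using A LAk LAmono P(5) by auto
  have vert: "\<forall>v\<in>set (step k n P). VV z k v"
  proof
    fix v assume "v \<in> set (step k n P)"
    then have "v \<in> set (lay k n) \<or> v \<in> set P \<or> v = k" by (auto simp: step_def)
    then show "VV z k v"
    proof (elim disjE)
      assume "v \<in> set (lay k n)"
      then show ?thesis using set_lay[of v k n] nk k4 unfolding VV_def by auto
    next
      assume "v \<in> set P" then show ?thesis using P(6) unfolding VV_def by auto
    next
      assume "v = k" then show ?thesis using k4 unfolding VV_def by auto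
    qed
  qed
  have hd: "hd (step k n P) = k"
    using arcs_blocks[of "[k, -(k-1), -k] @ P @ [k]" k int "[1..<Suc n]"]
    by (simp add: step_def lay_def)
  have sm: "sum_list (butlast (step k n P)) = 2*z - 1"
  proof -
    have "sum_list P = sum_list (butlast P) + (k-1)"
      using P(1,3) by (metis append_butlast_last_id sum_list_append sum_list_simps add_0_right sum_list.Cons)
    then show ?thesis using P(7) by (simp add: step_def butlast_append sum_lay)
  qed
  show ?thesis
    using A dist arcsok vert hd sm
    by (simp add: Inv_def step_def length_lay)
qed

lemma Inv_core: "3 < z \<Longrightarrow> Inv z 3 (core z) \<and> length (core z) = 10"
  by (auto simp: Inv_def core_def VV_def)

lemma Inv_build: "int j + 3 < z \<Longrightarrow> Inv z (int j + 3) (build z j) \<and> length (build z j) = 2*j*j + 10*j + 10"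
proof (induction j)
  case 0 then show ?case using Inv_core by simp
next
  case (Suc j)
  then have IH: "Inv z (int j + 4 - 1) (build z j)" "length (build z j) = 2*j*j + 10*j + 10"
    by (simp_all add: algebra_simps)
  have "Inv z (int j + 4) (step (int j + 4) (j+2) (build z j)) \<and>
        length (step (int j + 4) (j+2) (build z j)) = length (build z j) + 4*(j+2) + 4"
    using Inv_step[OF IH(1)] Suc.prems by simp
  then show ?case using IH(2) by (simp add: algebra_simps)
qed

definition G :: "int \<Rightarrow> int \<Rightarrow> int" where
  "G q x = (if 0 \<le> x then x else x + q)"

definition Cond :: "int \<Rightarrow> int \<times> int \<Rightarrow> int \<times> int \<Rightarrow> bool" where
  "Cond q x y \<longleftrightarrow> (case x of (a,b) \<Rightarrow> case y of (c,d) \<Rightarrow>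
     \<not>(G q a = G q d \<and> G q b = G q c) \<and> \<not>(G q a = q - G q d \<and> G q b = q - G q c))"

lemma Cond_sym: "Cond q x y = Cond q y x"
  unfolding Cond_def by (cases x; cases y) auto

lemma core_arcs: "set (arcs (core z)) = {(3,1),(1,2),(2,-1),(-1,-2),(-2,z),(z,-3),(-3,-1),(-1,z),(z,3)}"
  by (auto simp: core_def)

lemma CC: assumes "4 \<le> z" "2*z \<le> q" "x \<in> set (arcs (core z))" "y \<in> set (arcs (core z))"
  shows "Cond q x y"
proof -
  have Gs: "G q 3 = 3" "G q 1 = 1" "G q 2 = 2" "G q (-1) = q - 1" "G q (-2) = q - 2" "G q (-3) = q - 3"
    "G q z = z"
    using assms by (auto simp: G_def)
  have x: "x = (3,1) \<or> x = (1,2) \<or> x = (2,-1) \<or> x = (-1,-2) \<or> x = (-2,z) \<or> x = (z,-3) \<or>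
      x = (-3,-1) \<or> x = (-1,z) \<or> x = (z,3)" using assms(3) unfolding core_arcs by auto
  have y: "y = (3,1) \<or> y = (1,2) \<or> y = (2,-1) \<or> y = (-1,-2) \<or> y = (-2,z) \<or> y = (z,-3) \<or>
      y = (-3,-1) \<or> y = (-1,z) \<or> y = (z,3)" using assms(4) unfolding core_arcs by auto
  from x y show ?thesis using assms(1,2) by (elim disjE) (simp_all add: Cond_def Gs)
qed

lemma CL: assumes "T < z" "2*z \<le> q" "x \<in> set (arcs (core z))" "LA T y"
  shows "Cond q x y"
proof -
  obtain i k where ik: "1 \<le> i" "i < k" "4 \<le> k" "k \<le> T" "y \<in> set (blkarcs k i)"
    using assms(4) unfolding LA_def by blast
  have Gs: "G q k = k" "G q (-k) = q - k" "G q i = i" "G q (-i) = q - i"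
    "G q 3 = 3" "G q 1 = 1" "G q 2 = 2" "G q (-1) = q - 1" "G q (-2) = q - 2" "G q (-3) = q - 3"
    "G q z = z"
    using ik assms by (auto simp: G_def)
  have y: "y = (k,-i) \<or> y = (-i,-k) \<or> y = (-k,i) \<or> y = (i,k)" using ik(5) by (auto simp: blkarcs_def)
  have x: "x = (3,1) \<or> x = (1,2) \<or> x = (2,-1) \<or> x = (-1,-2) \<or> x = (-2,z) \<or> x = (z,-3) \<or>
      x = (-3,-1) \<or> x = (-1,z) \<or> x = (z,3)" using assms(3) unfolding core_arcs by auto
  show ?thesis using x y
    using ik assms by (elim disjE) (simp_all add: Cond_def Gs)
qed

lemma LLaux: assumes "1 \<le> i" "i < k" "4 \<le> k" "k \<le> T" "1 \<le> i'" "i' < k'" "4 \<le> k'" "k' \<le> T" "T < z" "2*z \<le> q"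
  shows "Cond q (k,-i) (k',-i')" "Cond q (k,-i) (-i',-k')" "Cond q (k,-i) (-k',i')" "Cond q (k,-i) (i',k')" "Cond q (-i,-k) (k',-i')" "Cond q (-i,-k) (-i',-k')" "Cond q (-i,-k) (-k',i')" "Cond q (-i,-k) (i',k')" "Cond q (-k,i) (k',-i')" "Cond q (-k,i) (-i',-k')" "Cond q (-k,i) (-k',i')" "Cond q (-k,i) (i',k')" "Cond q (i,k) (k',-i')" "Cond q (i,k) (-i',-k')" "Cond q (i,k) (-k',i')" "Cond q (i,k) (i',k')"
  using assms by (simp_all add: Cond_def G_def)

lemma LL: assumes "T < z" "2*z \<le> q" "LA T x" "LA T y"
  shows "Cond q x y"
proof -
  obtain i k where ik: "1 \<le> i" "i < k" "4 \<le> k" "k \<le> T" "x \<in> set (blkarcs k i)"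
    using assms(3) unfolding LA_def by blast
  obtain i' k' where ik': "1 \<le> i'" "i' < k'" "4 \<le> k'" "k' \<le> T" "y \<in> set (blkarcs k' i')"
    using assms(4) unfolding LA_def by blast
  have Gs: "G q k = k" "G q (-k) = q - k" "G q i = i" "G q (-i) = q - i"
     "G q k' = k'" "G q (-k') = q - k'" "G q i' = i'" "G q (-i') = q - i'"
    using ik ik' by (auto simp: G_def)
  have y: "y = (k',-i') \<or> y = (-i',-k') \<or> y = (-k',i') \<or> y = (i',k')" using ik'(5) by (auto simp: blkarcs_def)
  have x: "x = (k,-i) \<or> x = (-i,-k) \<or> x = (-k,i) \<or> x = (i,k)" using ik(5) by (auto simp: blkarcs_def)
  note L = LLaux[OF ik(1-4) ik'(1-4) assms(1,2)]
  from x y show ?thesis by (elim disjE) (simp_all only: L)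
qed

lemma cop1: "2 \<le> q \<Longrightarrow> coprime (q - 1) (q::nat)"
proof (rule coprimeI)
  fix c assume "2 \<le> q" "c dvd q - 1" "c dvd q"
  then have "c dvd q - (q - 1)" using dvd_diff_nat by blast
  then show "is_unit c" using \<open>2 \<le> q\<close> by simp
qed

lemma cop2: "odd q \<Longrightarrow> 3 \<le> q \<Longrightarrow> coprime (q - 2) (q::nat)"
proof (rule coprimeI)
  fix c assume o: "odd q" "3 \<le> q" "c dvd q - 2" "c dvd q"
  then have "c dvd q - (q - 2)" using dvd_diff_nat by blast
  then have "c dvd 2" using o by simp
  then have "c \<le> 2" "c \<noteq> 0" using dvd_imp_le[of c 2] by (auto intro: Nat.gr0I)
  then have "c = 1 \<or> c = 2" by linarith
  then show "is_unit c"
  proof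
    assume "c = 2" then have "2 dvd q" using o(4) by simp
    then show ?thesis using o(1) by simp
  qed simp
qed

lemma G_mod: "G q x mod q = x mod q"
  by (simp add: G_def)

lemma sum_G_mod: "sum_list (map (G q) xs) mod q = sum_list xs mod q"
proof (induction xs)
  case (Cons x xs)
  have "(G q x + sum_list (map (G q) xs)) mod q = (G q x mod q + sum_list (map (G q) xs) mod q) mod q"
    by (simp add: mod_add_eq)
  also have "\<dots> = (x mod q + sum_list xs mod q) mod q" using Cons by (simp add: G_mod)
  also have "\<dots> = (x + sum_list xs) mod q" by (simp add: mod_add_eq)
  finally show ?case by simp
qed simp

lemma int_sum_nat: "\<forall>x\<in>set xs. 0 \<le> g x \<Longrightarrow> int (sum_list (map (\<lambda>x. nat (g x)) xs)) = sum_list (map g xs)"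
  by (induction xs) auto

definition Mq :: "nat \<Rightarrow> nat" where
  "Mq q = (if q mod 4 = 0 then (q - 2) * (q - 4) div 2 - 3
                else if q mod 4 = 1 then (q - 3) * (q - 5) div 2 - 3
                else if q mod 4 = 2 then (q - 2) * (q - 6) div 2 - 3
                else (q - 3) * (q - 7) div 2 - 3)"

lemma div2_helper: "(a::nat) = 2 * b \<Longrightarrow> a div 2 = b" by simp

lemma main_P:
  fixes q :: nat assumes q12: "q \<ge> 12"
  shows "\<exists>P T. Inv (int (q div 2)) T P \<and> 3 \<le> T \<and> T < int (q div 2) \<and> length P = Mq q + 1 \<and> 1 \<le> Mq q"
proof -
  define n0 where "n0 = q div 4 - 2"
  define r where "r = q mod 4"
  have qe: "q = 4 * n0 + 8 + r"
  proof -
    have a: "q = 4 * (q div 4) + q mod 4" by simp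
    have "q div 4 \<ge> 3" using q12 by simp
    then show ?thesis unfolding n0_def r_def using a by linarith
  qed
  have r4: "r < 4" unfolding r_def by simp
  define z where "z = int (q div 2)"
  have ze: "z = 2 * int n0 + 4 + int (r div 2)" unfolding z_def qe using r4 by simp
  define P0 where "P0 = build z (2*n0)"
  have I0: "Inv z (int (2*n0) + 3) P0 \<and> length P0 = 2*(2*n0)*(2*n0) + 10*(2*n0) + 10"
    unfolding P0_def by (rule Inv_build) (simp add: ze)
  show ?thesis
  proof (cases "r < 2")
    case True
    have M: "Mq q = 8*n0*n0 + 20*n0 + 9"
    proof (cases "r = 0")
      case True
      have qm: "q mod 4 = 0" "q - 2 = 4*n0+6" "q - 4 = 4*n0+4" using qe r_def \<open>r = 0\<close> by simp_all
      then have "Mq q = (4*n0+6) * (4*n0+4) div 2 - 3" unfolding Mq_def by simp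
      also have "(4*n0+6) * (4*n0+4) div 2 = 8*n0*n0 + 20*n0 + 12"
        by (rule div2_helper) (simp add: algebra_simps)
      finally show ?thesis by simp
    next
      case False
      then have "r = 1" using \<open>r < 2\<close> by simp
      have qm: "q mod 4 = 1" "q - 3 = 4*n0+6" "q - 5 = 4*n0+4" using qe r_def \<open>r = 1\<close> by simp_all
      then have "Mq q = (4*n0+6) * (4*n0+4) div 2 - 3" unfolding Mq_def by simp
      also have "(4*n0+6) * (4*n0+4) div 2 = 8*n0*n0 + 20*n0 + 12"
        by (rule div2_helper) (simp add: algebra_simps)
      finally show ?thesis by simp
    qed
    show ?thesis
      using I0 M ze True
      by (intro exI[of _ P0] exI[of _ "int (2*n0) + 3"]) (auto simp: z_def[symmetric] algebra_simps)
  next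
    case False
    have M: "Mq q = 8*n0*n0 + 24*n0 + 13"
    proof (cases "r = 2")
      case True
      have qm: "q mod 4 = 2" "q - 2 = 4*n0+8" "q - 6 = 4*n0+4" using qe r_def \<open>r = 2\<close> by simp_all
      then have "Mq q = (4*n0+8) * (4*n0+4) div 2 - 3" unfolding Mq_def by simp
      also have "(4*n0+8) * (4*n0+4) div 2 = 8*n0*n0 + 24*n0 + 16"
        by (rule div2_helper) (simp add: algebra_simps)
      finally show ?thesis by simp
    next
      case False
      then have "r = 3" using \<open>\<not> r < 2\<close> r4 by simp
      have qm: "q mod 4 = 3" "q - 3 = 4*n0+8" "q - 7 = 4*n0+4" using qe r_def \<open>r = 3\<close> by simp_all
      then have "Mq q = (4*n0+8) * (4*n0+4) div 2 - 3" unfolding Mq_def by simp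
      also have "(4*n0+8) * (4*n0+4) div 2 = 8*n0*n0 + 24*n0 + 16"
        by (rule div2_helper) (simp add: algebra_simps)
      finally show ?thesis by simp
    qed
    have z5: "z = 2 * int n0 + 5" using ze False r4 by simp
    have I0': "Inv z (2 * int n0 + 4 - 1) P0" using I0 by (simp add: algebra_simps)
    have S: "Inv z (2 * int n0 + 4) (step (2 * int n0 + 4) n0 P0) \<and>
        length (step (2 * int n0 + 4) n0 P0) = length P0 + 4*n0 + 4"
      by (rule Inv_step[OF I0']) (auto simp: z5)
    show ?thesis
      using S I0 M z5
      by (intro exI[of _ "step (2 * int n0 + 4) n0 P0"] exI[of _ "2 * int n0 + 4"])
         (auto simp: z_def[symmetric] algebra_simps)
  qed
qed

lemma G_props:
  assumes "VV z T v" "T < z" "2*z \<le> q" "1 \<le> T"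
  shows "0 < G q v \<and> G q v < q"
  using assms unfolding VV_def G_def by auto

lemma G_inj:
  assumes "VV z T v" "VV z T w" "T < z" "2*z \<le> q" "1 \<le> T" "G q v = G q w"
  shows "v = w"
  using assms unfolding VV_def G_def by (auto split: if_splits)

theorem corollary4p11:
  fixes q :: nat
  assumes "q \<ge> 12"
  shows "\<exists>m s. is_SOS q 2 m s \<and> good_SOS 2 s \<and> coprime (weight m s) q \<and>
           m = (if q mod 4 = 0 then (q - 2) * (q - 4) div 2 - 3
                else if q mod 4 = 1 then (q - 3) * (q - 5) div 2 - 3
                else if q mod 4 = 2 then (q - 2) * (q - 6) div 2 - 3
                else (q - 3) * (q - 7) div 2 - 3)"
proof -
  define z where "z = int (q div 2)"
  obtain P T where PT: "Inv z T P" "3 \<le> T" "T < z" "length P = Mq q + 1" "1 \<le> Mq q"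
    using main_P[OF assms] unfolding z_def by blast
  have z2: "2 * z \<le> int q" unfolding z_def by simp
  have z4: "4 \<le> z" using PT by simp
  define Gq where "Gq = G (int q)"
  define f where "f = (\<lambda>x. nat (Gq x))"
  define Q where "Q = map f P"
  from PT(1) have P: "P \<noteq> []" "hd P = T" "last P = T" "distinct (arcs P)"
    "\<forall>x\<in>set (arcs P). x \<in> set (arcs (core z)) \<or> LA T x" "\<forall>v\<in>set P. VV z T v"
    "sum_list (butlast P) = 2*z - 1"
    unfolding Inv_def by auto
  have Gp: "0 < Gq v \<and> Gq v < int q" if "v \<in> set P" for v
    unfolding Gq_def using G_props[OF P(6)[rule_format, OF that] PT(3) z2] PT(2) by simp
  have finj: "v = w" if "v \<in> set P" "w \<in> set P" "f v = f w" for v w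
  proof -
    have "Gq v = Gq w" using that Gp unfolding f_def by (metis less_le nat_eq_iff2 order.strict_implies_order)
    then show ?thesis unfolding Gq_def
      using G_inj[OF P(6)[rule_format, OF that(1)] P(6)[rule_format, OF that(2)] PT(3) z2] PT(2) by simp
  qed
  have arcsQ: "arcs Q = map (\<lambda>(a,b). (f a, f b)) (arcs P)" unfolding Q_def by (rule arcs_map)
  have len: "length Q \<ge> 2" using PT(4,5) unfolding Q_def by auto
  have hl: "hd Q = last Q" using P unfolding Q_def by (simp add: hd_map last_map)
  have dist: "distinct (arcs Q)"
  proof -
    have "inj_on (\<lambda>(a,b). (f a, f b)) (set (arcs P))"
    proof (rule inj_onI)
      fix x y assume xy: "x \<in> set (arcs P)" "y \<in> set (arcs P)"
        "(\<lambda>(a,b). (f a, f b)) x = (\<lambda>(a,b). (f a, f b)) y"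
      obtain a b where x: "x = (a,b)" by fastforce
      obtain c d where y: "y = (c,d)" by fastforce
      have m: "a \<in> set P" "b \<in> set P" "c \<in> set P" "d \<in> set P"
        using arcs_mem[OF xy(1)] arcs_mem[OF xy(2)] x y by auto
      have "f a = f c" "f b = f d" using xy(3) x y by auto
      then show "x = y" using finj m x y by auto
    qed
    then show ?thesis unfolding arcsQ using P(4) by (simp add: distinct_map)
  qed
  have rng: "\<forall>x\<in>set Q. 0 < x \<and> x < q"
  proof
    fix x assume "x \<in> set Q"
    then obtain v where v: "v \<in> set P" "x = nat (Gq v)" unfolding Q_def f_def by auto
    then show "0 < x \<and> x < q" using Gp[OF v(1)] by linarith
  qed
  have condP: "Cond (int q) x y" if "x \<in> set (arcs P)" "y \<in> set (arcs P)" for x y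
  proof -
    have x: "x \<in> set (arcs (core z)) \<or> LA T x" and y: "y \<in> set (arcs (core z)) \<or> LA T y"
      using P(5) that by auto
    show ?thesis
      using x y CC[OF z4 z2] CL[OF PT(3) z2] LL[OF PT(3) z2] Cond_sym by metis
  qed
  have cf: "\<forall>a b c d. (a,b) \<in> set (arcs Q) \<longrightarrow> (c,d) \<in> set (arcs Q) \<longrightarrow>
        (a,b) \<noteq> (d,c) \<and> (a,b) \<noteq> ((q-d) mod q, (q-c) mod q)"
  proof (intro allI impI)
    fix a b c d assume ab: "(a,b) \<in> set (arcs Q)" and cd: "(c,d) \<in> set (arcs Q)"
    obtain a' b' where ab': "(a',b') \<in> set (arcs P)" "a = f a'" "b = f b'"
      using ab unfolding arcsQ by auto
    obtain c' d' where cd': "(c',d') \<in> set (arcs P)" "c = f c'" "d = f d'"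
      using cd unfolding arcsQ by auto
    have C: "Cond (int q) (a',b') (c',d')" using condP ab'(1) cd'(1) by blast
    have inP: "a' \<in> set P" "b' \<in> set P" "c' \<in> set P" "d' \<in> set P"
      using arcs_mem[OF ab'(1)] arcs_mem[OF cd'(1)] by auto
    have GG: "0 < Gq a'" "Gq a' < int q" "0 < Gq b'" "Gq b' < int q" "0 < Gq c'" "Gq c' < int q" "0 < Gq d'" "Gq d' < int q"
      using Gp inP by auto
    have md: "(q - d) mod q = q - d" "(q - c) mod q = q - c"
      using GG unfolding cd' f_def by auto
    have C': "\<not>(Gq a' = Gq d' \<and> Gq b' = Gq c') \<and> \<not>(Gq a' = int q - Gq d' \<and> Gq b' = int q - Gq c')"
      using C unfolding Cond_def Gq_def by simp
    show "(a,b) \<noteq> (d,c) \<and> (a,b) \<noteq> ((q-d) mod q, (q-c) mod q)"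
      unfolding md using C' GG unfolding ab'(2,3) cd'(2,3) f_def by auto
  qed
  define n where "n = length Q - 1"
  define s where "s = (\<lambda>i. Q ! (i mod n))"
  have A: "is_SOS q 2 n s \<and> good_SOS 2 s \<and> weight n s = sum_list (butlast Q)"
    unfolding n_def s_def by (rule abstract[OF len hl dist rng cf])
  have nM: "n = Mq q" unfolding n_def Q_def using PT(4) by simp
  have wmod: "sum_list (butlast Q) mod q = nat (2*z - 1)"
  proof -
    have bQ: "butlast Q = map f (butlast P)" unfolding Q_def by (simp add: map_butlast)
    have "\<forall>x\<in>set (butlast P). 0 \<le> Gq x" using Gp in_set_butlastD by fastforce
    then have "int (sum_list (butlast Q)) = sum_list (map Gq (butlast P))"
      unfolding bQ f_def by (rule int_sum_nat)
    then have "int (sum_list (butlast Q)) mod int q = sum_list (butlast P) mod int q"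
      unfolding Gq_def using sum_G_mod by metis
    also have "\<dots> = 2*z - 1" using P(7) z2 z4 by simp
    finally have "int (sum_list (butlast Q) mod q) = 2*z - 1" by (simp add: zmod_int)
    then show ?thesis by simp
  qed
  have cop: "coprime (sum_list (butlast Q)) q"
  proof -
    have q0: "q \<noteq> 0" using assms by simp
    have "coprime (sum_list (butlast Q) mod q) q"
    proof (cases "even q")
      case True
      then have "nat (2*z - 1) = q - 1" unfolding z_def by auto
      then show ?thesis using wmod cop1 assms by simp
    next
      case False
      have h0: "2 * (q div 2) = q - 1" using False by (rule odd_two_times_div_two_nat)
      have h: "2 * z = int q - 1" unfolding z_def using h0 assms
        by (metis of_nat_1 of_nat_diff of_nat_mult of_nat_numeral le_trans one_le_numeral)
      then have "nat (2*z - 1) = q - 2" using assms by simp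
      then show ?thesis using wmod cop2 assms False by simp
    qed
    then show ?thesis using q0 by simp
  qed
  show ?thesis
    using A cop nM unfolding Mq_def
    by (intro exI[of _ n] exI[of _ s]) simp
qed

end
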